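(* Let $A \in \mathbb{R}^{n\times p}$. Let $f:\mathbb{R}^n\to\mathbb{R}$ be convex, finite everywhere and Lipschitz-continuous, and let $C$ be the domain of its Fenchel conjugate $f^\ast$. Let $h:\mathbb{R}^p\to\mathbb{R}\cup\{+\infty\}$ be lower-semicontinuous, $\mu$-strongly convex and essentially smooth. Let $(\rho_t)_{t\geq1}$ be step sizes in $[0,1]$ and $y_0\in C$. Consider: (i) the generalized conditional gradient recursion: for $t\geq1$, $$x_{t-1} = \arg\min_{x\in\mathbb{R}^p} h(x) + x^\top A^\top y_{t-1} = (h^\ast)'(-A^\top y_{t-1}),\quad \bar y_{t-1}\in\arg\max_{y\in C} y^\top A x_{t-1} - f^\ast(y),\quad y_t = (1-\rho_t)y_{t-1} + \rho_t \bar y_{t-1};$$ (ii) the mirror descent recursion started from $x_0 = (h^\ast)'(-A^\top y_0)$: for $t\geq 1$, $$\bar y_{t-1} \in \arg\max_{y\in C}\ y^\top A x_{t-1} - f^\ast(y),\qquad x_t = \arg\min_{x\in\mathbb{R}^p}\ h(x) - (1-\rho_t)\, x^\top h'(x_{t-1}) + \rho_t\, x^\top A^\top \bar y_{t-1}.$$ Then these two recursions are equivalent: (with the same choices of maximizers $\bar y_{t-1}$) they generate the same sequence $(x_t)$, and $h'(x_t) = -A^\top y_t$ for all $t\geq0$.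
   Context: $h$ is essentially smooth if it is differentiable on the interior of its domain $K$ (assumed nonempty) and $\|h'(x)\|\to+\infty$ as $x$ approaches the boundary of $K$; then $h'$ is a bijection from ${\rm int}(K)$ onto $\mathbb{R}^p$, and $(h^\ast)'$ is its inverse. The Fenchel conjugate is $f^\ast(y)=\sup_z y^\top z - f(z)$; $h^\ast$ is differentiable and $(h^\ast)'(z)$ is the unique maximizer of $x^\top z - h(x)$. *)

theory Defs
  imports "HOL-Analysis.Analysis"
begin

definition fconj :: "('a::real_inner \<Rightarrow> ereal) \<Rightarrow> 'a \<Rightarrow> ereal" where
  "fconj f y = (SUP z. ereal (y \<bullet> z) - f z)"

definition edom :: "('a \<Rightarrow> ereal) \<Rightarrow> 'a set" where
  "edom f = {x. f x < \<infinity>}"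

definition lsc :: "('a::topological_space \<Rightarrow> ereal) \<Rightarrow> bool" where
  "lsc h \<longleftrightarrow> (\<forall>x. h x \<le> Liminf (at x) h)"

definition strongly_convex_ereal :: "real \<Rightarrow> ('a::real_normed_vector \<Rightarrow> ereal) \<Rightarrow> bool" where
  "strongly_convex_ereal \<mu> h \<longleftrightarrow> \<mu> > 0 \<and>
     (\<forall>x y. \<forall>l\<in>{0..1}. h (l *\<^sub>R x + (1 - l) *\<^sub>R y)
        \<le> ereal l * h x + ereal (1 - l) * h y - ereal (\<mu> / 2 * l * (1 - l) * (norm (x - y))\<^sup>2))"

definition essentially_smooth :: "('a::real_inner \<Rightarrow> ereal) \<Rightarrow> ('a \<Rightarrow> 'a) \<Rightarrow> bool" where
  "essentially_smooth h dh \<longleftrightarrow>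
     interior (edom h) \<noteq> {} \<and>
     (\<forall>x\<in>interior (edom h). GDERIV (\<lambda>z. real_of_ereal (h z)) x :> dh x) \<and>
     (\<forall>b\<in>frontier (edom h). filterlim (\<lambda>x. norm (dh x)) at_top (at b within interior (edom h)))"

end

theory Submission
  imports Defs
begin


lemma sc_real:
  fixes h :: "'a::real_normed_vector \<Rightarrow> ereal"
  assumes sc: "strongly_convex_ereal \<mu> h" and pr: "\<forall>z. h z \<noteq> -\<infinity>"
    and hx: "h x < \<infinity>" and hy: "h y < \<infinity>" and l: "0 \<le> l" "l \<le> 1"
  shows "h (l *\<^sub>R x + (1 - l) *\<^sub>R y) < \<infinity> \<and>
    real_of_ereal (h (l *\<^sub>R x + (1 - l) *\<^sub>R y)) \<le> l * real_of_ereal (h x) + (1 - l) * real_of_ereal (h y)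
        - \<mu> / 2 * l * (1 - l) * (norm (x - y))\<^sup>2"
proof -
  obtain a where a: "h x = ereal a" using hx pr by (cases "h x") auto
  obtain b where b: "h y = ereal b" using hy pr by (cases "h y") auto
  have "h (l *\<^sub>R x + (1 - l) *\<^sub>R y) \<le> ereal l * h x + ereal (1 - l) * h y - ereal (\<mu> / 2 * l * (1 - l) * (norm (x - y))\<^sup>2)"
    using sc l unfolding strongly_convex_ereal_def by auto
  also have "\<dots> = ereal (l * a + (1 - l) * b - \<mu> / 2 * l * (1 - l) * (norm (x - y))\<^sup>2)"
    by (simp add: a b)
  finally have *: "h (l *\<^sub>R x + (1 - l) *\<^sub>R y) \<le> ereal (l * a + (1 - l) * b - \<mu> / 2 * l * (1 - l) * (norm (x - y))\<^sup>2)" .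
  obtain r where r: "h (l *\<^sub>R x + (1 - l) *\<^sub>R y) = ereal r"
    using * pr by (cases "h (l *\<^sub>R x + (1 - l) *\<^sub>R y)") auto
  show ?thesis using * by (simp add: a b r)
qed

lemma real_limit_aux:
  fixes a b c :: real
  assumes "\<And>l. 0 < l \<Longrightarrow> l < 1 \<Longrightarrow> a \<le> b - c * (1 - l)" "c \<ge> 0"
  shows "a \<le> b - c"
proof (rule ccontr)
  assume "\<not> ?thesis"
  then have d: "a - (b - c) > 0" by simp
  show False
  proof (cases "c = 0")
    case True then show ?thesis using assms(1)[of "1/2"] d by simp
  next
    case False
    then have c: "c > 0" using assms(2) by simp
    define l where "l = min (1/2) ((a - (b - c)) / (2*c))"
    have l0: "0 < l" "l < 1" using c d by (auto simp: l_def)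
    have "l \<le> (a - (b - c)) / (2*c)" by (simp add: l_def)
    then have "c * l \<le> c * ((a - (b - c)) / (2*c))" using c by (intro mult_left_mono) auto
    then have "c * l \<le> (a - (b - c))/2" using c by simp
    then show False using assms(1)[OF l0] d by (simp add: algebra_simps)
  qed
qed




lemma quad_growth:
  fixes h :: "'a::real_inner \<Rightarrow> ereal"
  assumes sc: "strongly_convex_ereal \<mu> h" and pr: "\<forall>z. h z \<noteq> -\<infinity>"
    and hm: "h m < \<infinity>" and mn: "\<forall>z. h m + ereal (m \<bullet> v) \<le> h z + ereal (z \<bullet> v)"
    and hz: "h z < \<infinity>"
  shows "real_of_ereal (h m) + m \<bullet> v + \<mu>/2 * (norm (z - m))\<^sup>2 \<le> real_of_ereal (h z) + z \<bullet> v"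
proof -
  have mu: "\<mu> > 0" using sc by (simp add: strongly_convex_ereal_def)
  define H where "H = (\<lambda>z. real_of_ereal (h z))"
  have fin: "h u = ereal (H u)" if "h u < \<infinity>" for u using pr that unfolding H_def
    by (cases "h u") auto
  have key: "H m + m \<bullet> v \<le> (H z + z \<bullet> v) - \<mu>/2 * (norm (z - m))\<^sup>2 * (1 - l)" if l: "0 < l" "l < 1" for l
  proof -
    define p where "p = l *\<^sub>R z + (1 - l) *\<^sub>R m"
    from sc_real[OF sc pr hz hm, of l] l have p: "h p < \<infinity>"
      and pH: "H p \<le> l * H z + (1 - l) * H m - \<mu> / 2 * l * (1 - l) * (norm (z - m))\<^sup>2"
      by (auto simp: p_def H_def)
    have "ereal (H m + m \<bullet> v) \<le> ereal (H p + p \<bullet> v)" using mn[rule_format, of p] fin[OF hm] fin[OF p] by simp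
    then have "H m + m \<bullet> v \<le> H p + p \<bullet> v" by simp
    also have "p \<bullet> v = l * (z \<bullet> v) + (1 - l) * (m \<bullet> v)" by (simp add: p_def inner_add_left)
    finally have "H m + m \<bullet> v \<le> l * H z + (1 - l) * H m - \<mu> / 2 * l * (1 - l) * (norm (z - m))\<^sup>2 + (l * (z \<bullet> v) + (1 - l) * (m \<bullet> v))"
      using pH by linarith
    then have "l * (H m + m \<bullet> v) \<le> l * ((H z + z \<bullet> v) - \<mu>/2 * (norm (z - m))\<^sup>2 * (1 - l))"
      by (simp add: algebra_simps)
    then show ?thesis using l by simp
  qed
  have "H m + m \<bullet> v \<le> (H z + z \<bullet> v) - \<mu>/2 * (norm (z - m))\<^sup>2"
    by (rule real_limit_aux[OF key]) (use mu in auto)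
  then show ?thesis by (simp add: H_def)
qed

lemma young_aux:
  fixes d u :: "'a::real_inner"
  assumes mu: "\<mu> > 0"
  shows "d \<bullet> u - \<mu>/2 * (norm u)\<^sup>2 \<le> (norm d)\<^sup>2 / (2*\<mu>)"
proof -
  have "d \<bullet> u \<le> norm d * norm u" by (rule norm_cauchy_schwarz)
  moreover have "0 \<le> (norm d - \<mu> * norm u)\<^sup>2" by simp
  then have "2 * \<mu> * (norm d * norm u) \<le> (norm d)\<^sup>2 + \<mu>\<^sup>2 * (norm u)\<^sup>2"
    by (simp add: power2_eq_square algebra_simps)
  moreover have "2 * \<mu> * (d \<bullet> u) \<le> 2 * \<mu> * (norm d * norm u)"
    using calculation(1) mu by (intro mult_left_mono) auto
  moreover have "2 * \<mu> * (d \<bullet> u - \<mu>/2 * (norm u)\<^sup>2) = 2 * \<mu> * (d \<bullet> u) - \<mu>\<^sup>2 * (norm u)\<^sup>2"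
    by (simp add: power2_eq_square algebra_simps)
  ultimately have "2 * \<mu> * (d \<bullet> u - \<mu>/2 * (norm u)\<^sup>2) \<le> (norm d)\<^sup>2"
    by linarith
  then show ?thesis using mu by (simp add: field_simps)
qed




lemma gderiv_conj:
  fixes h :: "'a::real_inner \<Rightarrow> ereal"
  assumes sc: "strongly_convex_ereal \<mu> h" and pr: "\<forall>z. h z \<noteq> -\<infinity>"
    and hm: "h m < \<infinity>" and mn: "\<forall>z. h m + ereal (m \<bullet> v) \<le> h z + ereal (z \<bullet> v)"
  shows "GDERIV (\<lambda>z. real_of_ereal (fconj h z)) (- v) :> m"
proof -
  have mu: "\<mu> > 0" using sc by (simp add: strongly_convex_ereal_def)
  define H where "H = (\<lambda>z. real_of_ereal (h z))"
  have fin: "h u = ereal (H u)" if "h u < \<infinity>" for u using pr that unfolding H_def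
    by (cases "h u") auto
  have up: "fconj h u \<le> ereal (u \<bullet> m - H m + (norm (u + v))\<^sup>2 / (2*\<mu>))" for u
    unfolding fconj_def
  proof (rule SUP_least)
    fix z
    show "ereal (u \<bullet> z) - h z \<le> ereal (u \<bullet> m - H m + (norm (u + v))\<^sup>2 / (2*\<mu>))"
    proof (cases "h z < \<infinity>")
      case False then have "h z = \<infinity>" by simp
      then show ?thesis by simp
    next
      case True
      have q: "H m + m \<bullet> v + \<mu>/2 * (norm (z - m))\<^sup>2 \<le> H z + z \<bullet> v"
        using quad_growth[OF sc pr hm mn True] by (simp add: H_def)
      have y: "(u + v) \<bullet> (z - m) - \<mu>/2 * (norm (z - m))\<^sup>2 \<le> (norm (u + v))\<^sup>2 / (2*\<mu>)"
        by (rule young_aux[OF mu])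
      have "u \<bullet> z - H z \<le> u \<bullet> m - H m + (norm (u + v))\<^sup>2 / (2*\<mu>)"
      proof -
        have "(u + v) \<bullet> (z - m) = u \<bullet> z + v \<bullet> z - u \<bullet> m - v \<bullet> m" by (simp add: inner_simps)
        then show ?thesis using q y inner_commute[of m v] inner_commute[of z v] by linarith
      qed
      then show ?thesis using fin[OF True] by simp
    qed
  qed
  have lo: "ereal (u \<bullet> m - H m) \<le> fconj h u" for u
    unfolding fconj_def
    by (rule SUP_upper2[of m]) (simp_all add: fin[OF hm])
  define F where "F = (\<lambda>z. real_of_ereal (fconj h z))"
  have Fb: "u \<bullet> m - H m \<le> F u \<and> F u \<le> u \<bullet> m - H m + (norm (u + v))\<^sup>2 / (2*\<mu>)" for u
  proof -
    have "fconj h u = ereal (F u)" unfolding F_def using up[of u] lo[of u]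
      by (cases "fconj h u") auto
    then show ?thesis using up[of u] lo[of u] by simp
  qed
  have F0: "F (-v) = (-v) \<bullet> m - H m" using Fb[of "-v"] by simp
  have "(F has_derivative (\<lambda>h. h \<bullet> m)) (at (-v))"
    unfolding has_derivative_at_alt
  proof (intro conjI allI impI)
    show "bounded_linear (\<lambda>h. h \<bullet> m)" by (rule bounded_linear_inner_left)
    fix e :: real assume e: "e > 0"
    show "\<exists>d>0. \<forall>y. norm (y - - v) < d \<longrightarrow> norm (F y - F (- v) - (y - - v) \<bullet> m) \<le> e * norm (y - - v)"
    proof (intro exI[of _ "2*\<mu>*e"] conjI allI impI)
      show "0 < 2*\<mu>*e" using mu e by simp
      fix y assume y: "norm (y - - v) < 2*\<mu>*e"
      have yy: "norm (y - - v) = norm (y + v)" by simp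
      have b: "0 \<le> F y - F (- v) - (y - - v) \<bullet> m" "F y - F (- v) - (y - - v) \<bullet> m \<le> (norm (y + v))\<^sup>2 / (2*\<mu>)"
        using Fb[of y] F0 by (auto simp: inner_simps)
      have "(norm (y + v))\<^sup>2 / (2*\<mu>) = norm (y + v) * (norm (y + v) / (2*\<mu>))" by (simp add: power2_eq_square)
      also have "\<dots> \<le> norm (y + v) * e" using y mu by (intro mult_left_mono) (auto simp: field_simps)
      finally show "norm (F y - F (- v) - (y - - v) \<bullet> m) \<le> e * norm (y - - v)"
        using b by (simp add: mult.commute)
    qed
  qed
  then show ?thesis unfolding gderiv_def F_def by simp
qed




lemma line_deriv:
  fixes H :: "'a::real_inner \<Rightarrow> real"
  assumes "GDERIV H (x + s *\<^sub>R d) :> G"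
  shows "((\<lambda>l. H (x + l *\<^sub>R d)) has_real_derivative (d \<bullet> G)) (at s)"
proof -
  have l: "((\<lambda>l. x + l *\<^sub>R d) has_derivative (\<lambda>l. l *\<^sub>R d)) (at s)"
    by (auto intro!: derivative_eq_intros)
  have H: "(H has_derivative (\<lambda>h. h \<bullet> G)) (at (x + s *\<^sub>R d))" using assms by (simp add: gderiv_def)
  have "((\<lambda>l. H (x + l *\<^sub>R d)) has_derivative (\<lambda>l. (l *\<^sub>R d) \<bullet> G)) (at s)"
    using has_derivative_compose[OF l H] by (simp add: o_def)
  moreover have "(\<lambda>l. (l *\<^sub>R d) \<bullet> G) = (*) (d \<bullet> G)" by (auto simp: fun_eq_iff)
  ultimately show ?thesis by (simp add: has_field_derivative_def)
qed

lemma grad_ineq: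
  fixes h :: "'a::real_inner \<Rightarrow> ereal"
  assumes sc: "strongly_convex_ereal \<mu> h" and pr: "\<forall>z. h z \<noteq> -\<infinity>"
    and hz: "h z < \<infinity>" and hy: "h y < \<infinity>"
    and D: "GDERIV (\<lambda>u. real_of_ereal (h u)) z :> G"
  shows "real_of_ereal (h z) + G \<bullet> (y - z) + \<mu>/2 * (norm (y - z))\<^sup>2 \<le> real_of_ereal (h y)"
proof (rule ccontr)
  define H where "H = (\<lambda>z. real_of_ereal (h z))"
  define c where "c = \<mu>/2 * (norm (y - z))\<^sup>2"
  define K where "K = H y - H z - c"
  define \<delta> where "\<delta> = y - z"
  assume "\<not> ?thesis"
  then have gt: "\<delta> \<bullet> G - K > 0" by (simp add: H_def c_def K_def \<delta>_def inner_commute)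
  have d1: "((\<lambda>l. H (z + l *\<^sub>R \<delta>)) has_real_derivative (\<delta> \<bullet> G)) (at 0)"
    using line_deriv[of H z 0 \<delta> G] D by (simp add: H_def)
  have d2: "((\<lambda>l. H (z + l *\<^sub>R \<delta>) - l * K - c * l\<^sup>2) has_real_derivative (\<delta> \<bullet> G - K)) (at 0)"
    using d1 by (auto intro!: derivative_eq_intros)
  obtain d where d: "d > 0" "\<And>l. l > 0 \<Longrightarrow> l < d \<Longrightarrow>
      H (z + 0 *\<^sub>R \<delta>) - 0 * K - c * 0\<^sup>2 < H (z + (0 + l) *\<^sub>R \<delta>) - (0 + l) * K - c * (0 + l)\<^sup>2"
    using DERIV_pos_inc_right[OF d2 gt] by blast
  define l where "l = min (d/2) (1/2)"
  have l: "0 < l" "l < d" "l \<le> 1" using d by (auto simp: l_def)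
  have A: "H z < H (z + l *\<^sub>R \<delta>) - l * K - c * l\<^sup>2" using d(2)[OF l(1,2)] by simp
  have "z + l *\<^sub>R \<delta> = l *\<^sub>R y + (1 - l) *\<^sub>R z" by (simp add: \<delta>_def algebra_simps)
  then have B: "H (z + l *\<^sub>R \<delta>) \<le> l * H y + (1 - l) * H z - \<mu> / 2 * l * (1 - l) * (norm (y - z))\<^sup>2"
    using sc_real[OF sc pr hy hz, of l] l by (simp add: H_def)
  have "l * H y + (1 - l) * H z - \<mu> / 2 * l * (1 - l) * (norm (y - z))\<^sup>2 = H z + l * K + c * l\<^sup>2"
    unfolding K_def c_def by (simp add: power2_eq_square field_simps)
  then show False using A B by linarith
qed




lemma edom_convex:
  fixes h :: "'a::real_normed_vector \<Rightarrow> ereal"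
  assumes sc: "strongly_convex_ereal \<mu> h" and pr: "\<forall>z. h z \<noteq> -\<infinity>"
  shows "convex (edom h)"
  unfolding convex_def edom_def
proof (intro ballI allI impI)
  fix x y and u v :: real
  assume x: "x \<in> {x. h x < \<infinity>}" and y: "y \<in> {x. h x < \<infinity>}" and "0 \<le> u" "0 \<le> v" "u + v = 1"
  then have "v = 1 - u" "u \<le> 1" by auto
  then show "u *\<^sub>R x + v *\<^sub>R y \<in> {x. h x < \<infinity>}"
    using sc_real[OF sc pr _ _ \<open>0 \<le> u\<close>, of x y] x y by auto
qed

lemma interior_min:
  fixes h :: "'a::euclidean_space \<Rightarrow> ereal"
  assumes sc: "strongly_convex_ereal \<mu> h" and pr: "\<forall>z. h z \<noteq> -\<infinity>"
    and es: "essentially_smooth h dh"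
    and mn: "\<forall>z. h x + ereal (x \<bullet> v) \<le> h z + ereal (z \<bullet> v)"
  shows "x \<in> interior (edom h) \<and> dh x = - v"
proof -
  have mu: "\<mu> > 0" using sc by (simp add: strongly_convex_ereal_def)
  define H where "H = (\<lambda>z. real_of_ereal (h z))"
  have fin: "h u = ereal (H u)" if "h u < \<infinity>" for u using pr that unfolding H_def
    by (cases "h u") auto
  define I where "I = interior (edom h)"
  have I0: "I \<noteq> {}" and Dh: "\<And>z. z \<in> I \<Longrightarrow> GDERIV H z :> dh z"
    and bd: "\<And>b. b \<in> frontier (edom h) \<Longrightarrow> filterlim (\<lambda>x. norm (dh x)) at_top (at b within I)"
    using es unfolding essentially_smooth_def I_def H_def by auto
  have Ifin: "h z < \<infinity>" if "z \<in> I" for z using that interior_subset unfolding I_def edom_def by blast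
  have oI: "open I" by (simp add: I_def)
  have cvx: "convex (edom h)" by (rule edom_convex[OF sc pr])
  obtain a where aI: "a \<in> I" using I0 by blast
  have ha: "h a < \<infinity>" by (rule Ifin[OF aI])
  have hx: "h x < \<infinity>"
  proof -
    have "h x + ereal (x \<bullet> v) \<le> ereal (H a) + ereal (a \<bullet> v)" using mn fin[OF ha] by metis
    then show ?thesis using pr[rule_format, of x] by (cases "h x") auto
  qed
  have mnH: "H x + x \<bullet> v \<le> H z + z \<bullet> v" if "h z < \<infinity>" for z
    using mn[rule_format, of z] fin[OF hx] fin[OF that] by simp
  have xI: "x \<in> I"
  proof (rule ccontr)
    assume xnI: "x \<notin> I"
    have "x \<in> edom h" using hx by (simp add: edom_def)
    then have "x \<in> frontier (edom h)" using xnI closure_subset unfolding frontier_def I_def by blast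
    note lim = bd[OF this]
    have ax: "a \<noteq> x" using aI xnI by blast
    define nax where "nax = norm (a - x)"
    have nax: "nax > 0" using ax by (simp add: nax_def)
    have "isCont H a" using Dh[OF aI] unfolding gderiv_def by (rule has_derivative_continuous)
    then obtain r0 where r0: "r0 > 0" "\<And>y. dist y a < r0 \<Longrightarrow> dist (H y) (H a) < 1"
      unfolding continuous_at_eps_delta by (meson zero_less_one)
    obtain r1 where r1: "r1 > 0" "ball a r1 \<subseteq> I" using oI aI open_contains_ball by blast
    define r where "r = min r0 r1 / 2"
    have r: "r > 0" "r < r0" "r < r1" using r0 r1 by (auto simp: r_def)
    define K0 where "K0 = H a + 1 - H x + norm v * nax"
    define M where "M = (\<bar>K0\<bar> + norm v * nax + 1) / r"
    have "eventually (\<lambda>z. M + 1 \<le> norm (dh z)) (at x within I)"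
      using lim unfolding filterlim_at_top by blast
    then obtain \<delta> where \<delta>: "\<delta> > 0" "\<And>z. z \<in> I \<Longrightarrow> z \<noteq> x \<Longrightarrow> dist z x < \<delta> \<Longrightarrow> M + 1 \<le> norm (dh z)"
      unfolding eventually_at by blast
    define s where "s = min (1/2) (\<delta> / (2 * nax))"
    have s: "0 < s" "s \<le> 1/2" "s * nax < \<delta>" using \<delta> nax
      by (auto simp: s_def min_def field_simps)
    define z where "z = x + s *\<^sub>R (a - x)"
    have zI_gen: "x + t *\<^sub>R (a - x) \<in> I" if "0 < t" "t \<le> 1" for t
      using mem_interior_convex_shrink[OF cvx aI[unfolded I_def] \<open>x \<in> edom h\<close> that]
      by (simp add: I_def algebra_simps)
    have zI: "z \<in> I" unfolding z_def using s by (intro zI_gen) auto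
    have zx: "z \<noteq> x" using s ax by (simp add: z_def)
    have "dist z x = s * nax" using s(1) by (simp add: z_def dist_norm nax_def)
    then have Gbig: "M + 1 \<le> norm (dh z)" using \<delta>(2)[OF zI zx] s by simp
    define G where "G = dh z"
    have Mpos: "M > 0" unfolding M_def using r(1) nax
      by (intro divide_pos_pos add_nonneg_pos) (auto intro: add_nonneg_nonneg)
    have G0: "norm G > 0" unfolding G_def using Gbig Mpos by linarith
    have neg: "(a - x) \<bullet> G + (a - x) \<bullet> v < 0"
    proof -
      define a' where "a' = a + r *\<^sub>R (G /\<^sub>R norm G)"
      have "dist a' a = r" using r G0 by (simp add: a'_def dist_norm)
      then have "a' \<in> ball a r1" using r by (simp add: dist_commute)
      then have a'I: "a' \<in> I" using r1(2) by blast
      have a'H: "H a' < H a + 1" using r0(2)[of a'] \<open>dist a' a = r\<close> r by (auto simp: dist_real_def)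
      have gi: "H z + G \<bullet> (a' - z) + \<mu>/2 * (norm (a' - z))\<^sup>2 \<le> H a'"
        using grad_ineq[OF sc pr Ifin[OF zI] Ifin[OF a'I]] Dh[OF zI] by (simp add: H_def G_def)
      have "0 \<le> \<mu>/2 * (norm (a' - z))\<^sup>2" using mu by simp
      have Ga: "G \<bullet> (a' - z) = (1 - s) * (G \<bullet> (a - x)) + r * norm G"
      proof -
        have "G \<bullet> (G /\<^sub>R norm G) = norm G" using G0 by (simp add: power2_norm_eq_inner[symmetric] power2_eq_square)
        then show ?thesis by (simp add: a'_def z_def inner_simps algebra_simps)
      qed
      have mz: "H x + x \<bullet> v \<le> H z + z \<bullet> v" by (rule mnH[OF Ifin[OF zI]])
      have zv: "z \<bullet> v = x \<bullet> v + s * ((a - x) \<bullet> v)" by (simp add: z_def inner_simps)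
      have "(a - x) \<bullet> v \<le> norm v * nax" unfolding nax_def
        by (metis inner_commute mult.commute norm_cauchy_schwarz)
      moreover have "- ((a - x) \<bullet> v) \<le> norm v * nax" unfolding nax_def
        by (metis inner_commute mult.commute norm_cauchy_schwarz inner_minus_left norm_minus_cancel)
      have sv1: "s * ((a - x) \<bullet> v) \<le> s * (norm v * nax)"
        using calculation s(1) by (intro mult_left_mono) auto
      have sv2: "s * (norm v * nax) \<le> norm v * nax"
        using s nax by (intro mult_left_le_one_le) auto
      have sv: "s * ((a - x) \<bullet> v) \<le> norm v * nax" using sv1 sv2 by linarith
      have rG: "r * norm G > \<bar>K0\<bar> + norm v * nax + 1"
        using Gbig r unfolding M_def G_def by (simp add: field_simps)
      define P where "P = G \<bullet> (a - x)"
      have ineq: "(1 - s) * P + r * norm G < K0"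
        using gi Ga a'H mz zv sv \<open>0 \<le> \<mu>/2 * (norm (a' - z))\<^sup>2\<close> unfolding K0_def P_def by linarith
      have P: "P < - (norm v * nax) - 1"
      proof (cases "P \<ge> 0")
        case True then have "(1 - s) * P \<ge> 0" using s by simp
        then show ?thesis using ineq rG abs_ge_self[of K0] nax
          mult_nonneg_nonneg[OF norm_ge_zero[of v], of nax] by linarith
      next
        case False
        then have "s * P \<le> 0" using s by (simp add: mult_nonneg_nonpos)
        then have "P \<le> (1 - s) * P" by (simp add: algebra_simps)
        then show ?thesis using ineq rG abs_ge_self[of K0] nax
          mult_nonneg_nonneg[OF norm_ge_zero[of v], of nax] by linarith
      qed
      have "(a - x) \<bullet> v \<le> norm v * nax" by fact
      then show ?thesis using P unfolding P_def by (simp add: inner_commute)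
    qed
    define \<phi> where "\<phi> = (\<lambda>\<sigma>. H (x + \<sigma> *\<^sub>R (a - x)) + (x + \<sigma> *\<^sub>R (a - x)) \<bullet> v)"
    have dphi: "(\<phi> has_real_derivative ((a - x) \<bullet> G + (a - x) \<bullet> v)) (at s)"
    proof -
      have d1: "((\<lambda>l. H (x + l *\<^sub>R (a - x))) has_real_derivative ((a - x) \<bullet> G)) (at s)"
        using line_deriv[of H x s "a - x" G] Dh[OF zI] by (simp add: z_def G_def)
      have d2: "((\<lambda>\<sigma>. x \<bullet> v + \<sigma> * ((a - x) \<bullet> v)) has_real_derivative ((a - x) \<bullet> v)) (at s)"
        by (auto intro!: derivative_eq_intros)
      have e: "\<phi> = (\<lambda>\<sigma>. H (x + \<sigma> *\<^sub>R (a - x)) + (x \<bullet> v + \<sigma> * ((a - x) \<bullet> v)))"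
        by (simp add: \<phi>_def fun_eq_iff inner_simps)
      show ?thesis unfolding e by (rule DERIV_add[OF d1 d2])
    qed
    obtain d where d: "d > 0" "\<And>t. t > 0 \<Longrightarrow> t < d \<Longrightarrow> \<phi> s > \<phi> (s + t)"
      using DERIV_neg_dec_right[OF dphi neg] by blast
    define \<tau> where "\<tau> = min (d/2) ((1 - s)/2)"
    have \<tau>: "0 < \<tau>" "\<tau> < d" using d s by (auto simp: \<tau>_def)
    define \<sigma> where "\<sigma> = s + \<tau>"
    have "\<tau> \<le> (1 - s) / 2" unfolding \<tau>_def by (rule min.cobounded2)
    moreover have "s \<le> 1/2" using s(2) .
    moreover have "0 < \<tau>" using \<tau>(1) .
    ultimately have \<sigma>: "s < \<sigma>" "\<sigma> < 1" unfolding \<sigma>_def by (auto intro: add_pos_pos)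
    define w where "w = x + \<sigma> *\<^sub>R (a - x)"
    have wI: "w \<in> I" unfolding w_def using \<sigma> s by (intro zI_gen) auto
    have lt: "\<phi> \<sigma> < \<phi> s" using d(2)[OF \<tau>] by (simp add: \<sigma>_def)
    define \<theta> where "\<theta> = s / \<sigma>"
    have \<theta>: "0 < \<theta>" "\<theta> < 1" using s \<sigma> by (auto simp: \<theta>_def field_simps)
    have zc: "z = \<theta> *\<^sub>R w + (1 - \<theta>) *\<^sub>R x"
      using \<sigma> s by (simp add: z_def w_def \<theta>_def algebra_simps)
    have Hz: "H z \<le> \<theta> * H w + (1 - \<theta>) * H x - \<mu> / 2 * \<theta> * (1 - \<theta>) * (norm (w - x))\<^sup>2"
      using sc_real[OF sc pr Ifin[OF wI] hx, of \<theta>] \<theta> zc by (simp add: H_def)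
    have "0 \<le> \<mu> / 2 * \<theta> * (1 - \<theta>) * (norm (w - x))\<^sup>2" using mu \<theta> by simp
    have zv: "z \<bullet> v = \<theta> * (w \<bullet> v) + (1 - \<theta>) * (x \<bullet> v)" by (simp add: zc inner_simps)
    have ps: "\<phi> s = H z + z \<bullet> v" and pw: "\<phi> \<sigma> = H w + w \<bullet> v" by (simp_all add: \<phi>_def z_def w_def)
    have m1: "\<theta> * \<phi> \<sigma> < \<theta> * \<phi> s" using lt \<theta> by simp
    have m2: "(1 - \<theta>) * (H x + x \<bullet> v) \<le> (1 - \<theta>) * \<phi> s"
      using mnH[OF Ifin[OF zI]] \<theta> ps by (intro mult_left_mono) auto
    have "\<phi> s \<le> \<theta> * \<phi> \<sigma> + (1 - \<theta>) * (H x + x \<bullet> v)"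
    proof -
      have e1: "\<theta> * \<phi> \<sigma> = \<theta> * H w + \<theta> * (w \<bullet> v)" by (simp add: pw algebra_simps)
      have e2: "(1 - \<theta>) * (H x + x \<bullet> v) = (1 - \<theta>) * H x + (1 - \<theta>) * (x \<bullet> v)" by (simp add: algebra_simps)
      show ?thesis using Hz zv ps e1 e2 \<open>0 \<le> \<mu> / 2 * \<theta> * (1 - \<theta>) * (norm (w - x))\<^sup>2\<close> by linarith
    qed
    then show False using m1 m2 by (simp add: algebra_simps)
  qed
  have D: "((\<lambda>u. H u + u \<bullet> v) has_derivative (\<lambda>h. h \<bullet> dh x + h \<bullet> v)) (at x)"
    using Dh[OF xI] unfolding gderiv_def by (auto intro!: derivative_eq_intros)
  have ev: "eventually (\<lambda>u. H x + x \<bullet> v \<le> H u + u \<bullet> v) (at x)"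
    using eventually_at_in_open'[OF oI xI] by eventually_elim (use mnH Ifin in auto)
  have "(\<lambda>h. h \<bullet> dh x + h \<bullet> v) = (\<lambda>h. 0)" by (rule has_derivative_local_min[OF D ev])
  then have "(dh x + v) \<bullet> dh x + (dh x + v) \<bullet> v = 0" by metis
  then have "(dh x + v) \<bullet> (dh x + v) = 0" by (simp add: inner_simps)
  then have "dh x + v = 0" by simp
  then show ?thesis using xI by (simp add: I_def eq_neg_iff_add_eq_0)
qed





lemma exists_min:
  fixes h :: "'a::euclidean_space \<Rightarrow> ereal"
  assumes sc: "strongly_convex_ereal \<mu> h" and pr: "\<forall>z. h z \<noteq> -\<infinity>"
    and es: "essentially_smooth h dh" and ls: "lsc h"
  shows "\<exists>m. \<forall>z. h m + ereal (m \<bullet> v) \<le> h z + ereal (z \<bullet> v)"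
proof -
  have mu: "\<mu> > 0" using sc by (simp add: strongly_convex_ereal_def)
  define H where "H = (\<lambda>z. real_of_ereal (h z))"
  have fin: "h u = ereal (H u)" if "h u < \<infinity>" for u using pr that unfolding H_def
    by (cases "h u") auto
  define I where "I = interior (edom h)"
  have I0: "I \<noteq> {}" and Dh: "\<And>z. z \<in> I \<Longrightarrow> GDERIV H z :> dh z"
    using es unfolding essentially_smooth_def I_def H_def by auto
  obtain a where aI: "a \<in> I" using I0 by blast
  have ha: "h a < \<infinity>" using aI interior_subset unfolding I_def edom_def by blast
  define \<Phi> where "\<Phi> = (\<lambda>z. H z + z \<bullet> v)"
  define D where "D = {z. h z < \<infinity>}"
  define L where "L = H a + a \<bullet> v - (norm (dh a + v))\<^sup>2 / (2*\<mu>)"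
  have lower: "L \<le> \<Phi> z" if "z \<in> D" for z
  proof -
    have g: "H a + dh a \<bullet> (z - a) + \<mu>/2 * (norm (z - a))\<^sup>2 \<le> H z"
      using grad_ineq[OF sc pr ha _ Dh[OF aI, unfolded H_def], of z] that by (simp add: D_def H_def)
    have y: "(- (dh a + v)) \<bullet> (z - a) - \<mu>/2 * (norm (z - a))\<^sup>2 \<le> (norm (- (dh a + v)))\<^sup>2 / (2*\<mu>)"
      by (rule young_aux[OF mu])
    have "(- (dh a + v)) \<bullet> (z - a) = - (dh a \<bullet> (z - a)) - (z \<bullet> v) + (a \<bullet> v)"
      by (simp add: inner_simps inner_commute)
    moreover have "(- (dh a + v)) \<bullet> (z - a) - \<mu>/2 * (norm (z - a))\<^sup>2 \<le> (norm (dh a + v))\<^sup>2 / (2*\<mu>)"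
      using y by (simp only: norm_minus_cancel)
    ultimately show ?thesis using g unfolding L_def \<Phi>_def by linarith
  qed
  define S where "S = \<Phi> ` D"
  have SD: "S \<noteq> {}" using ha by (auto simp: S_def D_def)
  have Sb: "bdd_below S" unfolding S_def by (rule bdd_belowI2[of _ L]) (rule lower)
  define m where "m = Inf S"
  have mle: "m \<le> \<Phi> z" if "z \<in> D" for z
    unfolding m_def S_def using Sb that by (auto simp: S_def intro: cInf_lower)
  have "\<forall>n. \<exists>z. z \<in> D \<and> \<Phi> z < m + 1 / (real n + 1)"
  proof
    fix n
    have "Inf S < m + 1 / (real n + 1)" by (simp add: m_def)
    then obtain s where "s \<in> S" "s < m + 1 / (real n + 1)" using cInf_lessD[OF SD] by blast
    then show "\<exists>z. z \<in> D \<and> \<Phi> z < m + 1 / (real n + 1)" by (auto simp: S_def)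
  qed
  then obtain zs where zsD: "\<And>n. zs n \<in> D" and zsm: "\<And>n. \<Phi> (zs n) < m + 1 / (real n + 1)"
    by metis
  have mid: "\<mu>/8 * (norm (zs i - zs j))\<^sup>2 < (1 / (real i + 1) + 1 / (real j + 1)) / 2" for i j
  proof -
    define p where "p = (1/2) *\<^sub>R zs i + (1 - 1/2) *\<^sub>R zs j"
    have hi: "h (zs i) < \<infinity>" "h (zs j) < \<infinity>" using zsD by (auto simp: D_def)
    from sc_real[OF sc pr hi, of "1/2"] have p: "h p < \<infinity>"
      and pH: "H p \<le> 1/2 * H (zs i) + (1 - 1/2) * H (zs j) - \<mu> / 2 * (1/2) * (1 - 1/2) * (norm (zs i - zs j))\<^sup>2"
      by (auto simp: p_def H_def)
    have m1: "m \<le> H p + p \<bullet> v" using mle p by (simp add: D_def \<Phi>_def)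
    have pv: "p \<bullet> v = 1/2 * (zs i \<bullet> v) + 1/2 * (zs j \<bullet> v)" by (simp add: p_def inner_simps)
    have aux: "\<And>m Hp pv a b x y Q A B :: real. m \<le> Hp + pv \<Longrightarrow> pv = 1/2*a + 1/2*b \<Longrightarrow>
        Hp \<le> 1/2*x + (1-1/2)*y - Q \<Longrightarrow> x + a < m + A \<Longrightarrow> y + b < m + B \<Longrightarrow> Q < (A+B)/2"
      by (simp add: field_simps)
    have "\<mu> / 2 * (1/2) * (1 - 1/2) * (norm (zs i - zs j))\<^sup>2 < (1 / (real i + 1) + 1 / (real j + 1)) / 2"
      by (rule aux[OF m1 pv pH zsm[of i, unfolded \<Phi>_def] zsm[of j, unfolded \<Phi>_def]])
    then show ?thesis by simp
  qed
  have "Cauchy zs"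
    unfolding Cauchy_def
  proof (intro allI impI)
    fix e :: real assume e: "e > 0"
    have "\<mu> * e\<^sup>2 / 8 > 0" using mu e by simp
    then obtain N where N: "inverse (real (Suc N)) < \<mu> * e\<^sup>2 / 8" using reals_Archimedean by blast
    show "\<exists>M. \<forall>i\<ge>M. \<forall>j\<ge>M. dist (zs i) (zs j) < e"
    proof (intro exI[of _ N] allI impI)
      fix i j assume ij: "N \<le> i" "N \<le> j"
      have "1 / (real i + 1) \<le> inverse (real (Suc N))" "1 / (real j + 1) \<le> inverse (real (Suc N))"
        using ij by (auto simp: field_simps)
      moreover have aux2: "\<And>Q A B c :: real. Q < (A+B)/2 \<Longrightarrow> A \<le> c \<Longrightarrow> B \<le> c \<Longrightarrow> Q < c" by (simp add: field_simps)
      ultimately have "\<mu>/8 * (norm (zs i - zs j))\<^sup>2 < inverse (real (Suc N))" using mid[of i j] by blast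
      then have "\<mu>/8 * (norm (zs i - zs j))\<^sup>2 < \<mu> * e\<^sup>2 / 8" using N by (rule less_trans)
      then have "(norm (zs i - zs j))\<^sup>2 < e\<^sup>2" using mu by (simp add: field_simps)
      then have "norm (zs i - zs j) < e" using e by (meson abs_le_square_iff less_le_not_le not_le norm_ge_zero power2_less_imp_less)
      then show "dist (zs i) (zs j) < e" by (simp add: dist_norm)
    qed
  qed
  then obtain zz where zz: "zs \<longlonglongrightarrow> zz" using Cauchy_convergent_iff convergent_def by blast
  have hz: "h zz \<le> ereal (m - zz \<bullet> v)"
  proof (rule ccontr)
    assume "\<not> ?thesis"
    then have "ereal (m - zz \<bullet> v) < h zz" by simp
    then obtain c where c: "ereal (m - zz \<bullet> v) < ereal c" "ereal c < h zz" using ereal_dense2 by blast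
    define \<epsilon> where "\<epsilon> = (c - (m - zz \<bullet> v)) / 3"
    have \<epsilon>: "\<epsilon> > 0" using c(1) by (simp add: \<epsilon>_def)
    have "h zz \<le> Liminf (at zz) h" using ls by (simp add: lsc_def)
    then have "eventually (\<lambda>z. ereal c < h z) (at zz)" using c(2) le_Liminf_iff by blast
    then obtain \<delta> where \<delta>: "\<delta> > 0" "\<And>z. z \<noteq> zz \<Longrightarrow> dist z zz < \<delta> \<Longrightarrow> ereal c < h z"
      unfolding eventually_at by auto
    have epos: "\<epsilon> / (norm v + 1) > 0" using \<epsilon> by (intro divide_pos_pos) (auto intro: add_nonneg_pos)
    then have "min \<delta> (\<epsilon> / (norm v + 1)) > 0" using \<delta> by simp
    then obtain N1 where N1: "\<And>n. n \<ge> N1 \<Longrightarrow> dist (zs n) zz < min \<delta> (\<epsilon> / (norm v + 1))"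
      using zz unfolding lim_sequentially by blast
    obtain N2 where N2: "inverse (real (Suc N2)) < \<epsilon>" using reals_Archimedean \<epsilon> by blast
    define n where "n = max N1 N2"
    have dn: "dist (zs n) zz < \<delta>" "dist (zs n) zz < \<epsilon> / (norm v + 1)" using N1[of n] by (auto simp: n_def)
    have "1 / (real n + 1) \<le> inverse (real (Suc N2))" by (auto simp: n_def field_simps)
    then have Pn: "\<Phi> (zs n) < m + \<epsilon>" using zsm[of n] N2 by linarith
    have "\<bar>(zs n - zz) \<bullet> v\<bar> \<le> norm (zs n - zz) * norm v" using Cauchy_Schwarz_ineq2 by blast
    also have "\<dots> \<le> \<epsilon> / (norm v + 1) * (norm v + 1)"
      using dn(2) epos by (intro mult_mono) (auto simp: dist_norm)
    also have "\<dots> = \<epsilon>"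
    proof -
      have "norm v + 1 \<noteq> 0" using norm_ge_zero[of v] by linarith
      then show ?thesis by simp
    qed
    finally have iv: "\<bar>zs n \<bullet> v - zz \<bullet> v\<bar> \<le> \<epsilon>" by (simp add: inner_simps)
    have aux3: "\<And>Hn a b m c :: real. Hn + a < m + (c - (m - b)) / 3 \<Longrightarrow> - (a - b) \<le> (c - (m - b)) / 3
       \<Longrightarrow> 0 < (c - (m - b)) / 3 \<Longrightarrow> Hn < c" by (simp add: field_simps)
    have Hn: "H (zs n) < c" using aux3[OF Pn[unfolded \<Phi>_def \<epsilon>_def] abs_le_D2[OF iv, unfolded \<epsilon>_def] \<epsilon>[unfolded \<epsilon>_def]] .
    have hn: "h (zs n) = ereal (H (zs n))" using zsD[of n] fin by (simp add: D_def)
    show False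
    proof (cases "zs n = zz")
      case True then show ?thesis using c(2) hn Hn by simp
    next
      case False then show ?thesis using \<delta>(2)[OF False dn(1)] hn Hn by simp
    qed
  qed
  have hzz: "h zz < \<infinity>" using hz by (cases "h zz") auto
  show ?thesis
  proof (intro exI allI)
    fix z
    show "h zz + ereal (zz \<bullet> v) \<le> h z + ereal (z \<bullet> v)"
    proof (cases "h z < \<infinity>")
      case False then show ?thesis using pr by (simp add: fin[OF hzz])
    next
      case True
      have "H zz \<le> m - zz \<bullet> v" using hz fin[OF hzz] by simp
      then have "H zz + zz \<bullet> v \<le> H z + z \<bullet> v" using mle[of z] True by (simp add: D_def \<Phi>_def)
      then show ?thesis using fin[OF hzz] fin[OF True] by simp
    qed
  qed
qed




lemma ereal_shift: "(hz::ereal) \<noteq> -\<infinity> \<Longrightarrow> hz - ereal a + ereal b = hz + ereal (b - a)"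
  by (cases hz) auto

theorem proposition2:
  fixes A :: "real^'p^'n"
    and f :: "real^'n \<Rightarrow> real"
    and h :: "real^'p \<Rightarrow> ereal"
    and dh :: "real^'p \<Rightarrow> real^'p"
    and \<mu> :: real
    and \<rho> :: "nat \<Rightarrow> real"
    and x :: "nat \<Rightarrow> real^'p"
    and y ybar :: "nat \<Rightarrow> real^'n"
  defines "C \<equiv> edom (fconj (\<lambda>z. ereal (f z)))"
  assumes f_convex: "convex_on UNIV f"
    and f_lipschitz: "\<exists>L. L-lipschitz_on UNIV f"
    and h_proper: "\<forall>z. h z \<noteq> -\<infinity>"
    and h_lsc: "lsc h"
    and h_strong: "strongly_convex_ereal \<mu> h"
    and h_smooth: "essentially_smooth h dh"
    and rho: "\<forall>t\<ge>1. \<rho> t \<in> {0..1}"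
    and y0: "y 0 \<in> C"
    and ybar_max: "\<forall>t. ybar t \<in> C \<and>
         (\<forall>v\<in>C. ereal (v \<bullet> (A *v x t)) - fconj (\<lambda>z. ereal (f z)) v
                \<le> ereal (ybar t \<bullet> (A *v x t)) - fconj (\<lambda>z. ereal (f z)) (ybar t))"
    and y_step: "\<forall>t. y (Suc t) = (1 - \<rho> (Suc t)) *\<^sub>R y t + \<rho> (Suc t) *\<^sub>R ybar t"
  shows "((\<forall>t. \<forall>z. h (x t) + ereal (x t \<bullet> (transpose A *v y t))
                   \<le> h z + ereal (z \<bullet> (transpose A *v y t)))
          \<longleftrightarrow>
          (GDERIV (\<lambda>z. real_of_ereal (fconj h z)) (- (transpose A *v y 0)) :> x 0 \<and>
           (\<forall>t. \<forall>z. h (x (Suc t)) - ereal ((1 - \<rho> (Suc t)) * (x (Suc t) \<bullet> dh (x t)))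
                      + ereal (\<rho> (Suc t) * (x (Suc t) \<bullet> (transpose A *v ybar t)))
                   \<le> h z - ereal ((1 - \<rho> (Suc t)) * (z \<bullet> dh (x t)))
                      + ereal (\<rho> (Suc t) * (z \<bullet> (transpose A *v ybar t))))))
         \<and> ((\<forall>t. \<forall>z. h (x t) + ereal (x t \<bullet> (transpose A *v y t))
                   \<le> h z + ereal (z \<bullet> (transpose A *v y t)))
            \<longrightarrow> (\<forall>t. x t \<in> interior (edom h) \<and> dh (x t) = - (transpose A *v y t)))"
proof -
  define w where "w = (\<lambda>t. transpose A *v y t)"
  define P where "P = (\<lambda>t. \<forall>z. h (x t) + ereal (x t \<bullet> w t) \<le> h z + ereal (z \<bullet> w t))"
  define Q where "Q = (\<lambda>t. \<forall>z. h (x (Suc t)) - ereal ((1 - \<rho> (Suc t)) * (x (Suc t) \<bullet> dh (x t)))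
                      + ereal (\<rho> (Suc t) * (x (Suc t) \<bullet> (transpose A *v ybar t)))
                   \<le> h z - ereal ((1 - \<rho> (Suc t)) * (z \<bullet> dh (x t)))
                      + ereal (\<rho> (Suc t) * (z \<bullet> (transpose A *v ybar t))))"
  have int: "x t \<in> interior (edom h) \<and> dh (x t) = - w t" if "P t" for t
    using interior_min[OF h_strong h_proper h_smooth] that unfolding P_def by blast
  have key: "Q t \<longleftrightarrow> P (Suc t)" if "P t" for t
  proof -
    have dh: "dh (x t) = - w t" using int[OF that] by blast
    have wS: "w (Suc t) = (1 - \<rho> (Suc t)) *\<^sub>R w t + \<rho> (Suc t) *\<^sub>R (transpose A *v ybar t)"
      using y_step unfolding w_def by (simp add: matrix_vector_right_distrib matrix_vector_mult_scaleR)
    have obj: "h u - ereal ((1 - \<rho> (Suc t)) * (u \<bullet> dh (x t))) + ereal (\<rho> (Suc t) * (u \<bullet> (transpose A *v ybar t)))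
        = h u + ereal (u \<bullet> w (Suc t))" for u
    proof -
      have "h u - ereal ((1 - \<rho> (Suc t)) * (u \<bullet> dh (x t))) + ereal (\<rho> (Suc t) * (u \<bullet> (transpose A *v ybar t)))
          = h u + ereal (\<rho> (Suc t) * (u \<bullet> (transpose A *v ybar t)) - (1 - \<rho> (Suc t)) * (u \<bullet> dh (x t)))"
        using h_proper by (intro ereal_shift) auto
      also have "\<rho> (Suc t) * (u \<bullet> (transpose A *v ybar t)) - (1 - \<rho> (Suc t)) * (u \<bullet> dh (x t)) = u \<bullet> w (Suc t)"
        by (simp add: wS dh inner_simps)
      finally show ?thesis .
    qed
    show ?thesis unfolding Q_def P_def obj ..
  qed
  have gd: "GDERIV (\<lambda>z. real_of_ereal (fconj h z)) (- w t) :> x t" if "P t" for t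
  proof -
    have "h (x t) < \<infinity>" using int[OF that] interior_subset unfolding edom_def by blast
    then show ?thesis using gderiv_conj[OF h_strong h_proper _ that[unfolded P_def]] by blast
  qed
  have eq: "(\<forall>t. P t) \<longleftrightarrow> (GDERIV (\<lambda>z. real_of_ereal (fconj h z)) (- w 0) :> x 0 \<and> (\<forall>t. Q t))"
  proof
    assume all: "\<forall>t. P t"
    then show "GDERIV (\<lambda>z. real_of_ereal (fconj h z)) (- w 0) :> x 0 \<and> (\<forall>t. Q t)"
      using gd key by blast
  next
    assume r: "GDERIV (\<lambda>z. real_of_ereal (fconj h z)) (- w 0) :> x 0 \<and> (\<forall>t. Q t)"
    obtain m where m: "\<forall>z. h m + ereal (m \<bullet> w 0) \<le> h z + ereal (z \<bullet> w 0)"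
      using exists_min[OF h_strong h_proper h_smooth h_lsc] by blast
    have "m \<in> interior (edom h)" using interior_min[OF h_strong h_proper h_smooth m] by blast
    then have hm: "h m < \<infinity>" using interior_subset unfolding edom_def by blast
    have g1: "GDERIV (\<lambda>z. real_of_ereal (fconj h z)) (- w 0) :> m" by (rule gderiv_conj[OF h_strong h_proper hm m])
    have "(\<lambda>v. v \<bullet> m) = (\<lambda>v. v \<bullet> x 0)"
      using has_derivative_unique g1 r unfolding gderiv_def by blast
    then have "(m - x 0) \<bullet> m = (m - x 0) \<bullet> x 0" by metis
    then have "(m - x 0) \<bullet> (m - x 0) = 0" by (simp add: inner_simps)
    then have mx: "m = x 0" by simp
    have P0: "P 0" unfolding P_def using m mx by simp
    show "\<forall>t. P t"
    proof
      fix t show "P t"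
      proof (induction t)
        case 0 show ?case by (rule P0)
      next
        case (Suc t) then show ?case using key r by blast
      qed
    qed
  qed
  show ?thesis
    using eq int unfolding P_def Q_def w_def by blast
qed


end
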